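(* Let $n\ge3$, $K\ge1$, and $\underline a=(a_1,\dots,a_K)\in(\mathbb{C}^\times)^K$ with $a_k\neq a_j^{\pm1}$ for all $k\neq j$. If $a_k\neq\pm1$ for every $k$, then $\psi_{\underline a}:\mathrm{gim}(M_n)\to sl_{2n}^{\oplus K}$ is surjective.
   Context: For $n\geq 3$, $M_n=(m_{i,j})$ is the $n\times n$ integer matrix with $m_{i,i}=2$, $m_{i,i+1}=m_{i+1,i}=-1$ ($1\le i\le n-1$), $m_{1,n}=m_{n,1}=1$, all other entries $0$. $\mathrm{gim}(M_n)$ is the complex Lie algebra generated by $e_i,f_i,h_i$ ($1\le i\le n$) with relations: (R1) $[h_i,e_j]=m_{i,j}e_j$, $[h_i,f_j]=-m_{i,j}f_j$, $[e_i,f_i]=h_i$ for all $i,j$; (R2) for $i\ne j$ with $m_{i,j}\le0$: $[e_i,f_j]=0=[f_i,e_j]$, $(\mathrm{ad}\,e_i)^{1-m_{i,j}}e_j=0=(\mathrm{ad}\,f_i)^{1-m_{i,j}}f_j$; (R3) for $i\ne j$ with $m_{i,j}>0$: $[e_i,e_j]=0=[f_i,f_j]$, $(\mathrm{ad}\,e_i)^{m_{i,j}+1}f_j=0=(\mathrm{ad}\,f_i)^{m_{i,j}+1}e_j$. For $a\in\mathbb{C}^\times$, $\psi_a:\mathrm{gim}(M_n)\to sl_{2n}$ is the Lie algebra homomorphism determined by $\psi_a(e_i)=E_{i,i+1}-E_{n+i+1,n+i}$, $\psi_a(f_i)=E_{i+1,i}-E_{n+i,n+i+1}$ ($1\le i\le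 n-1$), $\psi_a(e_n)=E_{n,n+1}+a^{-1}E_{1,2n}$, $\psi_a(f_n)=E_{n+1,n}+aE_{2n,1}$, where $E_{i,j}$ are matrix units. For $\underline a=(a_1,\dots,a_K)$, $\psi_{\underline a}=\bigoplus_{k=1}^K\psi_{a_k}:\mathrm{gim}(M_n)\to sl_{2n}^{\oplus K}$, $x\mapsto(\psi_{a_1}(x),\dots,\psi_{a_K}(x))$. *)

theory Defs
  imports Complex_Main "HOL-Library.Function_Algebras"
begin

definition lie_algebra :: "(complex \<Rightarrow> 'a::ab_group_add \<Rightarrow> 'a) \<Rightarrow> ('a \<Rightarrow> 'a \<Rightarrow> 'a) \<Rightarrow> bool" where
  "lie_algebra sc br \<longleftrightarrow> module sc
     \<and> (\<forall>x y z. br (x + y) z = br x z + br y z)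
     \<and> (\<forall>x y z. br x (y + z) = br x y + br x z)
     \<and> (\<forall>c x y. br (sc c x) y = sc c (br x y))
     \<and> (\<forall>c x y. br x (sc c y) = sc c (br x y))
     \<and> (\<forall>x. br x x = 0)
     \<and> (\<forall>x y z. br x (br y z) + br y (br z x) + br z (br x y) = 0)"

definition lie_generated :: "(complex \<Rightarrow> 'a::ab_group_add \<Rightarrow> 'a) \<Rightarrow> ('a \<Rightarrow> 'a \<Rightarrow> 'a) \<Rightarrow> 'a set \<Rightarrow> 'a set" where
  "lie_generated sc br S = \<Inter>{V. S \<subseteq> V \<and> 0 \<in> V \<and> (\<forall>x\<in>V. \<forall>y\<in>V. x + y \<in> V)
      \<and> (\<forall>c. \<forall>x\<in>V. sc c x \<in> V) \<and> (\<forall>x\<in>V. \<forall>y\<in>V. br x y \<in> V)}"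

definition Mn :: "nat \<Rightarrow> nat \<Rightarrow> nat \<Rightarrow> int" where
  "Mn n i j = (if i = j then 2
     else if j = i + 1 \<or> i = j + 1 then -1
     else if (i = 1 \<and> j = n) \<or> (i = n \<and> j = 1) then 1 else 0)"

definition gim_relations :: "nat \<Rightarrow> (complex \<Rightarrow> 'a::ab_group_add \<Rightarrow> 'a) \<Rightarrow> ('a \<Rightarrow> 'a \<Rightarrow> 'a)
     \<Rightarrow> (nat \<Rightarrow> 'a) \<Rightarrow> (nat \<Rightarrow> 'a) \<Rightarrow> (nat \<Rightarrow> 'a) \<Rightarrow> bool" where
  "gim_relations n sc br e f h \<longleftrightarrow>
     (\<forall>i\<in>{1..n}. \<forall>j\<in>{1..n}.
        br (h i) (e j) = sc (of_int (Mn n i j)) (e j)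
      \<and> br (h i) (f j) = sc (- of_int (Mn n i j)) (f j))
   \<and> (\<forall>i\<in>{1..n}. br (e i) (f i) = h i)
   \<and> (\<forall>i\<in>{1..n}. \<forall>j\<in>{1..n}. i \<noteq> j \<and> Mn n i j \<le> 0 \<longrightarrow>
        br (e i) (f j) = 0 \<and> br (f i) (e j) = 0
      \<and> (br (e i) ^^ nat (1 - Mn n i j)) (e j) = 0
      \<and> (br (f i) ^^ nat (1 - Mn n i j)) (f j) = 0)
   \<and> (\<forall>i\<in>{1..n}. \<forall>j\<in>{1..n}. i \<noteq> j \<and> Mn n i j > 0 \<longrightarrow>
        br (e i) (e j) = 0 \<and> br (f i) (f j) = 0
      \<and> (br (e i) ^^ nat (Mn n i j + 1)) (f j) = 0
      \<and> (br (f i) ^^ nat (Mn n i j + 1)) (e j) = 0)"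

(* Matrices: functions nat \<Rightarrow> nat \<Rightarrow> complex, indices 1..N *)
type_synonym cmat = "nat \<Rightarrow> nat \<Rightarrow> complex"

definition Eu :: "nat \<Rightarrow> nat \<Rightarrow> cmat" where
  "Eu p q = (\<lambda>i j. if i = p \<and> j = q then 1 else 0)"

definition msc :: "complex \<Rightarrow> cmat \<Rightarrow> cmat" where
  "msc c A = (\<lambda>i j. c * A i j)"

definition mcomm :: "nat \<Rightarrow> cmat \<Rightarrow> cmat \<Rightarrow> cmat" where
  "mcomm N A B = (\<lambda>i j. (\<Sum>l=1..N. A i l * B l j) - (\<Sum>l=1..N. B i l * A l j))"

definition psi_e :: "complex \<Rightarrow> nat \<Rightarrow> nat \<Rightarrow> cmat" where
  "psi_e a n i = (if i < n then Eu i (i+1) - Eu (n+i+1) (n+i)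
                  else Eu n (n+1) + msc (inverse a) (Eu 1 (2*n)))"

definition psi_f :: "complex \<Rightarrow> nat \<Rightarrow> nat \<Rightarrow> cmat" where
  "psi_f a n i = (if i < n then Eu (i+1) i - Eu (n+i) (n+i+1)
                  else Eu (n+1) n + msc a (Eu (2*n) 1))"

(* K-tuples of matrices: X k i j, k \<in> {1..K}; componentwise operations *)
type_synonym cmats = "nat \<Rightarrow> nat \<Rightarrow> nat \<Rightarrow> complex"

definition tsc :: "complex \<Rightarrow> cmats \<Rightarrow> cmats" where
  "tsc c X = (\<lambda>k i j. c * X k i j)"

definition tbr :: "nat \<Rightarrow> cmats \<Rightarrow> cmats \<Rightarrow> cmats" where
  "tbr n X Y = (\<lambda>k. mcomm (2*n) (X k) (Y k))"

(* psi_{\<underline>a}(x) = (psi_{a_1}(x), ..., psi_{a_K}(x)) on the generators *)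
definition tuple_of :: "nat \<Rightarrow> (nat \<Rightarrow> cmat) \<Rightarrow> cmats" where
  "tuple_of K M = (\<lambda>k. if k \<in> {1..K} then M k else (\<lambda>_ _. 0))"

definition slK :: "nat \<Rightarrow> nat \<Rightarrow> cmats set" where
  "slK n K = {X. (\<forall>k i j. k \<notin> {1..K} \<or> i \<notin> {1..2*n} \<or> j \<notin> {1..2*n} \<longrightarrow> X k i j = 0)
               \<and> (\<forall>k\<in>{1..K}. (\<Sum>i=1..2*n. X k i i) = 0)}"

end

theory Submission
  imports Defs
begin

definition T :: "nat \<Rightarrow> (nat \<Rightarrow> complex) \<Rightarrow> nat \<Rightarrow> nat \<Rightarrow> cmats" where
  "T K w p q = (\<lambda>k i j. if k \<in> {1..K} \<and> i = p \<and> j = q then w k else 0)"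

lemma sum_if_eq: "finite A \<Longrightarrow> q \<in> A \<Longrightarrow> (\<Sum>l\<in>A. if l = q then (x::complex) else 0) = x"
  by simp

lemma tbr_T:
  assumes "p \<in> {1..2*n}" "q \<in> {1..2*n}" "r \<in> {1..2*n}" "s \<in> {1..2*n}"
  shows "tbr n (T K v p q) (T K w r s) =
     (if q = r then T K (\<lambda>k. v k * w k) p s else 0) - (if s = p then T K (\<lambda>k. v k * w k) r q else 0)"
proof (intro ext)
  fix k i j
  have 1: "(\<Sum>l=1..2*n. (if k \<in> {1..K} \<and> i = p \<and> l = q then v k else 0) * (if k \<in> {1..K} \<and> l = r \<and> j = s then w k else 0))
     = (if k \<in> {1..K} \<and> i = p \<and> j = s \<and> q = r then v k * w k else 0)"
    using assms by (auto simp: if_distrib[of "\<lambda>x. x * _"] cong: if_cong)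
  have 2: "(\<Sum>l=1..2*n. (if k \<in> {1..K} \<and> i = r \<and> l = s then w k else 0) * (if k \<in> {1..K} \<and> l = p \<and> j = q then v k else 0))
     = (if k \<in> {1..K} \<and> i = r \<and> j = q \<and> s = p then v k * w k else 0)"
    using assms by (auto simp: if_distrib[of "\<lambda>x. x * _"] cong: if_cong)
  show "tbr n (T K v p q) (T K w r s) k i j =
     ((if q = r then T K (\<lambda>k. v k * w k) p s else 0) - (if s = p then T K (\<lambda>k. v k * w k) r q else 0)) k i j"
    unfolding tbr_def mcomm_def T_def using 1 2 by auto
qed

lemma tbr_add_left: "tbr n (X + Y) Z = tbr n X Z + tbr n Y Z"
  unfolding tbr_def mcomm_def by (intro ext) (simp add: algebra_simps sum.distrib)
lemma tbr_add_right: "tbr n Z (X + Y) = tbr n Z X + tbr n Z Y"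
  unfolding tbr_def mcomm_def by (intro ext) (simp add: algebra_simps sum.distrib)
lemma tbr_diff_left: "tbr n (X - Y) Z = tbr n X Z - tbr n Y Z"
  unfolding tbr_def mcomm_def by (intro ext) (simp add: algebra_simps sum_subtractf)
lemma tbr_diff_right: "tbr n Z (X - Y) = tbr n Z X - tbr n Z Y"
  unfolding tbr_def mcomm_def by (intro ext) (simp add: algebra_simps sum_subtractf)
lemma tbr_minus_left: "tbr n (- X) Z = - tbr n X Z"
  unfolding tbr_def mcomm_def by (intro ext) (simp add: algebra_simps sum_negf)
lemma tbr_minus_right: "tbr n Z (- X) = - tbr n Z X"
  unfolding tbr_def mcomm_def by (intro ext) (simp add: algebra_simps sum_negf)
lemma tbr_zero_left: "tbr n 0 Z = 0"
  unfolding tbr_def mcomm_def by (intro ext) simp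
lemma tbr_zero_right: "tbr n Z 0 = 0"
  unfolding tbr_def mcomm_def by (intro ext) simp
lemma tbr_tsc_left: "tbr n (tsc c X) Z = tsc c (tbr n X Z)"
  unfolding tbr_def mcomm_def tsc_def by (intro ext) (simp add: algebra_simps sum_distrib_left)
lemma tbr_tsc_right: "tbr n Z (tsc c X) = tsc c (tbr n Z X)"
  unfolding tbr_def mcomm_def tsc_def by (intro ext) (simp add: algebra_simps sum_distrib_left)
lemma tbr_antisym: "tbr n X Y = - tbr n Y X"
  unfolding tbr_def mcomm_def by (intro ext) simp

definition E :: "nat \<Rightarrow> nat \<Rightarrow> nat \<Rightarrow> nat \<Rightarrow> cmats" where
  "E K k0 p q = T K (\<lambda>k. if k = k0 then 1 else 0) p q"

lemma tsc_1[simp]: "tsc 1 X = X" unfolding tsc_def by simp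

lemma tbr_ET:
  assumes "k0 \<in> {1..K}" "p \<in> {1..2*n}" "q \<in> {1..2*n}" "r \<in> {1..2*n}" "s \<in> {1..2*n}"
  shows "tbr n (E K k0 p q) (T K w r s) =
     (if q = r then tsc (w k0) (E K k0 p s) else 0) - (if s = p then tsc (w k0) (E K k0 r q) else 0)"
  unfolding E_def using assms
  by (simp add: tbr_T) (auto simp: T_def tsc_def intro!: ext)

lemma tbr_EE:
  assumes "k0 \<in> {1..K}" "p \<in> {1..2*n}" "q \<in> {1..2*n}" "r \<in> {1..2*n}" "s \<in> {1..2*n}"
  shows "tbr n (E K k0 p q) (E K k0 r s) =
     (if q = r then E K k0 p s else 0) - (if s = p then E K k0 r q else 0)"
  using tbr_ET[OF assms, of "\<lambda>k. if k = k0 then 1 else 0"] by (simp add: E_def)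

lemma cdist:
  fixes x y :: complex
  assumes "x \<noteq> 0" "y \<noteq> 0" "x \<noteq> y" "x \<noteq> inverse y"
  shows "(1 + inverse x) * (1 + x) \<noteq> (1 + inverse y) * (1 + y)"
proof
  assume h: "(1 + inverse x) * (1 + x) = (1 + inverse y) * (1 + y)"
  have e: "(1 + inverse z) * (1 + z) = 2 + z + inverse z" if "z \<noteq> 0" for z :: complex
    using that by (simp add: field_simps)
  have "x + inverse x = y + inverse y" using h e assms(1,2) by simp
  then have "(x + inverse x) * (x*y) = (y + inverse y) * (x*y)" by simp
  moreover have "(x + inverse x) * (x*y) = x*x*y + y" using assms(1) by (simp add: field_simps)
  moreover have "(y + inverse y) * (x*y) = y*y*x + x" using assms(2) by (simp add: field_simps)
  ultimately have "x*x*y + y = y*y*x + x" by simp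
  then have "(x - y) * (x * y - 1) = 0" by algebra
  then have "x = y \<or> x * y = 1" by auto
  then show False using assms by (auto simp: field_simps)
qed

locale LL =
  fixes n K :: nat and L :: "cmats set" and a :: "nat \<Rightarrow> complex"
  assumes n3: "n \<ge> 3"
  and add: "\<And>x y. x\<in>L \<Longrightarrow> y\<in>L \<Longrightarrow> x+y\<in>L"
  and scl: "\<And>x c. x\<in>L \<Longrightarrow> tsc c x \<in> L"
  and brc: "\<And>x y. x\<in>L \<Longrightarrow> y\<in>L \<Longrightarrow> tbr n x y \<in> L"
  and zero: "0 \<in> L"
  and ge: "\<And>i. 1 \<le> i \<Longrightarrow> i < n \<Longrightarrow> T K (\<lambda>_. 1) i (i+1) - T K (\<lambda>_. 1) (n+i+1) (n+i) \<in> L"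
  and gf: "\<And>i. 1 \<le> i \<Longrightarrow> i < n \<Longrightarrow> T K (\<lambda>_. 1) (i+1) i - T K (\<lambda>_. 1) (n+i) (n+i+1) \<in> L"
  and gen: "T K (\<lambda>_. 1) n (n+1) + T K (\<lambda>k. inverse (a k)) 1 (2*n) \<in> L"
  and gfn: "T K (\<lambda>_. 1) (n+1) n + T K a (2*n) 1 \<in> L"
  and anz: "\<forall>k\<in>{1..K}. a k \<noteq> 0"
  and a1: "\<forall>k\<in>{1..K}. a k \<noteq> 1 \<and> a k \<noteq> -1"
  and adist: "\<forall>k\<in>{1..K}. \<forall>j\<in>{1..K}. k \<noteq> j \<longrightarrow> a k \<noteq> a j \<and> a k \<noteq> inverse (a j)"
begin

abbreviation C where "C p q \<equiv> T K (\<lambda>_. 1) p q"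

lemma neg: "x \<in> L \<Longrightarrow> - x \<in> L"
proof -
  assume "x \<in> L"
  moreover have "tsc (-1) x = - x" unfolding tsc_def by (intro ext) simp
  ultimately show ?thesis using scl by metis
qed

lemma diff: "x \<in> L \<Longrightarrow> y \<in> L \<Longrightarrow> x - y \<in> L"
  using add neg by (metis diff_conv_add_uminus)

lemmas brs = tbr_diff_left tbr_diff_right tbr_add_left tbr_add_right tbr_minus_left tbr_minus_right
   tbr_zero_left tbr_zero_right tbr_tsc_left tbr_tsc_right

lemma Pu: "1 \<le> i \<Longrightarrow> i < j \<Longrightarrow> j \<le> n \<Longrightarrow> C i j - C (n+j) (n+i) \<in> L"
proof (induction j)
  case 0 then show ?case by simp
next
  case (Suc j)
  show ?case
  proof (cases "j = i")
    case True
    have "C i (i+1) - C (n+i+1) (n+i) \<in> L" by (rule ge) (use Suc True in auto)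
    then show ?thesis using True by (simp only: Suc_eq_plus1 add.assoc)
  next
    case False
    then have "C i j - C (n+j) (n+i) \<in> L" by (intro Suc.IH) (use Suc.prems False in auto)
    from brc[OF this ge[of j]] have "tbr n (C i j - C (n+j) (n+i)) (C j (j+1) - C (n+j+1) (n+j)) \<in> L"
      using Suc False by simp
    moreover have "tbr n (C i j - C (n+j) (n+i)) (C j (j+1) - C (n+j+1) (n+j)) = C i (Suc j) - C (n + Suc j) (n+i)"
      using Suc False n3 by (simp add: brs tbr_T)
    ultimately show ?thesis by (simp only: add_Suc_right)
  qed
qed

lemma Pl: "1 \<le> i \<Longrightarrow> i < j \<Longrightarrow> j \<le> n \<Longrightarrow> C j i - C (n+i) (n+j) \<in> L"
proof (induction j)
  case 0 then show ?case by simp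
next
  case (Suc j)
  show ?case
  proof (cases "j = i")
    case True
    have "C (i+1) i - C (n+i) (n+i+1) \<in> L" by (rule gf) (use Suc True in auto)
    then show ?thesis using True by (simp only: Suc_eq_plus1 add.assoc)
  next
    case False
    then have "C j i - C (n+i) (n+j) \<in> L" by (intro Suc.IH) (use Suc.prems False in auto)
    from brc[OF gf[of j] this] have "tbr n (C (j+1) j - C (n+j) (n+j+1)) (C j i - C (n+i) (n+j)) \<in> L"
      using Suc False by simp
    moreover have "tbr n (C (j+1) j - C (n+j) (n+j+1)) (C j i - C (n+i) (n+j)) = C (Suc j) i - C (n+i) (n + Suc j)"
      using Suc False n3 by (simp add: brs tbr_T)
    ultimately show ?thesis by (simp only: add_Suc_right)
  qed
qed


lemma T_add: "T K v p q + T K w p q = T K (\<lambda>k. v k + w k) p q"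
  unfolding T_def by (intro ext) auto

lemma sep:
  assumes mult: "\<And>w. T K w p q \<in> L \<Longrightarrow> T K (\<lambda>k. c k * w k) p q \<in> L"
    and wz: "T K wz p q \<in> L" and k0: "k0 \<in> {1..K}" and nz: "wz k0 \<noteq> 0"
    and dist: "\<forall>j\<in>{1..K}. j \<noteq> k0 \<longrightarrow> c j \<noteq> c k0"
  shows "E K k0 p q \<in> L"
proof -
  have P: "finite J \<Longrightarrow> T K (\<lambda>k. (\<Prod>j\<in>J. (c k - c j)) * wz k) p q \<in> L" for J
  proof (induction J rule: finite_induct)
    case empty then show ?case using wz by simp
  next
    case (insert j J)
    let ?P = "\<lambda>k. (\<Prod>j\<in>J. (c k - c j)) * wz k"
    have "T K (\<lambda>k. c k * ?P k) p q - tsc (c j) (T K ?P p q) \<in> L"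
      using diff mult scl insert.IH by blast
    moreover have "T K (\<lambda>k. c k * ?P k) p q - tsc (c j) (T K ?P p q) =
        T K (\<lambda>k. (\<Prod>j\<in>insert j J. (c k - c j)) * wz k) p q"
      using insert.hyps unfolding T_def tsc_def by (intro ext) (auto simp: algebra_simps)
    ultimately show ?case by simp
  qed
  let ?J = "{1..K} - {k0}"
  let ?c0 = "(\<Prod>j\<in>?J. (c k0 - c j)) * wz k0"
  have c0: "?c0 \<noteq> 0" using nz dist by auto
  have "tsc (inverse ?c0) (T K (\<lambda>k. (\<Prod>j\<in>?J. (c k - c j)) * wz k) p q) \<in> L"
    using P scl by blast
  moreover have "tsc (inverse ?c0) (T K (\<lambda>k. (\<Prod>j\<in>?J. (c k - c j)) * wz k) p q) = E K k0 p q"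
  proof (intro ext)
    fix k i j
    show "tsc (inverse ?c0) (T K (\<lambda>k. (\<Prod>j\<in>?J. (c k - c j)) * wz k) p q) k i j = E K k0 p q k i j"
    proof (cases "k \<in> {1..K} \<and> i = p \<and> j = q")
      case True
      show ?thesis
      proof (cases "k = k0")
        case True
        have ik: "inverse ?c0 * ?c0 = 1" using c0 by (rule left_inverse)
        show ?thesis using ik True \<open>k \<in> {1..K} \<and> i = p \<and> j = q\<close>
          unfolding tsc_def T_def E_def by simp
      next
        case False
        then have "(\<Prod>j\<in>?J. (c k - c j)) = 0"
          using \<open>k \<in> {1..K} \<and> i = p \<and> j = q\<close> by (intro prod_zero) auto
        then show ?thesis using False unfolding tsc_def T_def E_def by simp
      qed
    next
      case False then show ?thesis unfolding tsc_def T_def E_def by auto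
    qed
  qed
  ultimately show ?thesis by simp
qed

lemma W1: "T K (\<lambda>k. 1 + inverse (a k)) 1 (n+1) \<in> L"
proof -
  have "tbr n (C 1 n - C (n+n) (n+1)) (C n (n+1) + T K (\<lambda>k. inverse (a k)) 1 (2*n)) \<in> L"
    using brc[OF Pu[of 1 n] gen] n3 by simp
  moreover have "tbr n (C 1 n - C (n+n) (n+1)) (C n (n+1) + T K (\<lambda>k. inverse (a k)) 1 (2*n))
     = C 1 (n+1) + T K (\<lambda>k. inverse (a k)) 1 (n+1)"
    using n3 by (simp add: brs tbr_T)
  ultimately show ?thesis by (simp add: T_add)
qed


lemma W2: "T K (\<lambda>k. - (1 + a k)) (n+1) 1 \<in> L"
proof -
  have "tbr n (C n 1 - C (n+1) (n+n)) (C (n+1) n + T K a (2*n) 1) \<in> L"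
    using brc[OF Pl[of 1 n] gfn] n3 by simp
  moreover have "tbr n (C n 1 - C (n+1) (n+n)) (C (n+1) n + T K a (2*n) 1)
     = - C (n+1) 1 - T K a (n+1) 1"
    using n3 by (simp add: brs tbr_T)
  moreover have "- C (n+1) 1 - T K a (n+1) 1 = T K (\<lambda>k. - (1 + a k)) (n+1) 1"
    unfolding T_def by (intro ext) auto
  ultimately show ?thesis by simp
qed

definition u1 where "u1 = (\<lambda>k. 1 + inverse (a k))"
definition u2 where "u2 = (\<lambda>k. - (1 + a k))"

lemma Dmem: "tbr n (T K u1 1 (n+1)) (T K u2 (n+1) 1) \<in> L"
  using brc[OF W1 W2] unfolding u1_def u2_def .

lemma mult1: "T K w 1 (n+1) \<in> L \<Longrightarrow> T K (\<lambda>k. (2 * u1 k * u2 k) * w k) 1 (n+1) \<in> L"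
proof -
  assume w: "T K w 1 (n+1) \<in> L"
  have "tbr n (tbr n (T K u1 1 (n+1)) (T K u2 (n+1) 1)) (T K w 1 (n+1)) \<in> L" using brc[OF Dmem w] .
  moreover have "tbr n (tbr n (T K u1 1 (n+1)) (T K u2 (n+1) 1)) (T K w 1 (n+1))
     = T K (\<lambda>k. (2 * u1 k * u2 k) * w k) 1 (n+1)"
    using n3 apply (simp add: brs tbr_T)
    unfolding T_def by (intro ext) auto
  ultimately show ?thesis by simp
qed

lemma mult2: "T K w (n+1) 1 \<in> L \<Longrightarrow> T K (\<lambda>k. (-2 * u1 k * u2 k) * w k) (n+1) 1 \<in> L"
proof -
  assume w: "T K w (n+1) 1 \<in> L"
  have "tbr n (tbr n (T K u1 1 (n+1)) (T K u2 (n+1) 1)) (T K w (n+1) 1) \<in> L" using brc[OF Dmem w] .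
  moreover have "tbr n (tbr n (T K u1 1 (n+1)) (T K u2 (n+1) 1)) (T K w (n+1) 1)
     = T K (\<lambda>k. (-2 * u1 k * u2 k) * w k) (n+1) 1"
    using n3 apply (simp add: brs tbr_T)
    unfolding T_def by (intro ext) auto
  ultimately show ?thesis by simp
qed

lemma uprod: "u1 k * u2 k = - ((1 + inverse (a k)) * (1 + a k))"
  unfolding u1_def u2_def by (simp add: algebra_simps)

lemma udist: "k0 \<in> {1..K} \<Longrightarrow> j \<in> {1..K} \<Longrightarrow> j \<noteq> k0 \<Longrightarrow> 2 * u1 j * u2 j \<noteq> 2 * u1 k0 * u2 k0"
proof -
  assume h: "k0 \<in> {1..K}" "j \<in> {1..K}" "j \<noteq> k0"
  have "(1 + inverse (a j)) * (1 + a j) \<noteq> (1 + inverse (a k0)) * (1 + a k0)"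
    using cdist[of "a j" "a k0"] anz adist h by auto
  then show ?thesis by (simp add: mult.assoc uprod)
qed

lemma U1: assumes k0: "k0 \<in> {1..K}" shows "E K k0 1 (n+1) \<in> L"
proof (rule sep[where c = "\<lambda>k. 2 * u1 k * u2 k" and wz = u1])
  show "T K (\<lambda>k. 2 * u1 k * u2 k * w k) 1 (n + 1) \<in> L" if "T K w 1 (n + 1) \<in> L" for w
    using mult1[OF that] .
  show "T K u1 1 (n + 1) \<in> L" using W1 by (simp add: u1_def)
  show "k0 \<in> {1..K}" by (rule k0)
  have "a k0 \<noteq> 0" "a k0 \<noteq> -1" using anz a1 k0 by auto
  then show "u1 k0 \<noteq> 0" unfolding u1_def by (auto simp: field_simps add_eq_0_iff)
  show "\<forall>j\<in>{1..K}. j \<noteq> k0 \<longrightarrow> 2 * u1 j * u2 j \<noteq> 2 * u1 k0 * u2 k0" using udist k0 by auto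
qed

lemma U2: assumes k0: "k0 \<in> {1..K}" shows "E K k0 (n+1) 1 \<in> L"
proof (rule sep[where c = "\<lambda>k. -2 * u1 k * u2 k" and wz = u2])
  show "T K (\<lambda>k. -2 * u1 k * u2 k * w k) (n+1) 1 \<in> L" if "T K w (n+1) 1 \<in> L" for w
    using mult2[OF that] .
  show "T K u2 (n+1) 1 \<in> L" using W2 by (simp add: u2_def)
  show "k0 \<in> {1..K}" by (rule k0)
  have "a k0 \<noteq> -1" using a1 k0 by auto
  then show "u2 k0 \<noteq> 0" unfolding u2_def by (auto simp: add_eq_0_iff)
  show "\<forall>j\<in>{1..K}. j \<noteq> k0 \<longrightarrow> -2 * u1 j * u2 j \<noteq> -2 * u1 k0 * u2 k0" using udist k0 by auto
qed


lemma scl_inv: "tsc c X \<in> L \<Longrightarrow> c \<noteq> 0 \<Longrightarrow> X \<in> L"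
proof -
  assume h: "tsc c X \<in> L" "c \<noteq> 0"
  have "tsc (inverse c) (tsc c X) = X" using h(2) unfolding tsc_def by (intro ext) simp
  then show ?thesis using scl[OF h(1), of "inverse c"] by simp
qed

context
  fixes k0 assumes k0: "k0 \<in> {1..K}"
begin

abbreviation Ek where "Ek p q \<equiv> E K k0 p q"

lemmas cc = brs tbr_EE[OF k0] tbr_ET[OF k0]

lemma R1: "Ek 1 (2*n) \<in> L"
proof -
  have h1: "tbr n (tbr n (Ek 1 (n+1)) (Ek (n+1) 1)) (C n (n+1) + T K (\<lambda>k. inverse (a k)) 1 (2*n)) \<in> L"
    using brc[OF brc[OF U1[OF k0] U2[OF k0]] gen] .
  have h2: "tbr n (Ek 1 (n+1)) (C n 1 - C (n+1) (n+n)) \<in> L"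
    using brc[OF U1[OF k0] Pl[of 1 n]] n3 by simp
  have "tbr n (tbr n (Ek 1 (n+1)) (Ek (n+1) 1)) (C n (n+1) + T K (\<lambda>k. inverse (a k)) 1 (2*n))
      + tbr n (Ek 1 (n+1)) (C n 1 - C (n+1) (n+n)) = tsc (inverse (a k0) - 1) (Ek 1 (2*n))"
    using n3 k0 apply (simp add: cc)
    by (auto simp: E_def T_def tsc_def intro!: ext)
  then have "tsc (inverse (a k0) - 1) (Ek 1 (2*n)) \<in> L" using add[OF h1 h2] by simp
  moreover have "inverse (a k0) - 1 \<noteq> 0" using a1 k0 anz by (auto simp: field_simps)
  ultimately show ?thesis by (rule scl_inv)
qed


lemma Q1: "Ek (2*n) 1 \<in> L"
proof -
  have h1: "tbr n (tbr n (Ek 1 (n+1)) (Ek (n+1) 1)) (C (n+1) n + T K a (2*n) 1) \<in> L"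
    using brc[OF brc[OF U1[OF k0] U2[OF k0]] gfn] .
  have h2: "tbr n (Ek (n+1) 1) (C 1 n - C (n+n) (n+1)) \<in> L"
    using brc[OF U2[OF k0] Pu[of 1 n]] n3 by simp
  have "tbr n (tbr n (Ek 1 (n+1)) (Ek (n+1) 1)) (C (n+1) n + T K a (2*n) 1)
      + tbr n (Ek (n+1) 1) (C 1 n - C (n+n) (n+1)) = tsc (1 - a k0) (Ek (2*n) 1)"
    using n3 k0 apply (simp add: cc)
    by (auto simp: E_def T_def tsc_def intro!: ext)
  then have "tsc (1 - a k0) (Ek (2*n) 1) \<in> L" using add[OF h1 h2] by simp
  moreover have "1 - a k0 \<noteq> 0" using a1 k0 by auto
  ultimately show ?thesis by (rule scl_inv)
qed

lemma R2: "1 \<le> r \<Longrightarrow> r \<le> n \<Longrightarrow> Ek 1 (n+r) \<in> L"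
proof -
  assume r: "1 \<le> r" "r \<le> n"
  show ?thesis
  proof (cases "r = n")
    case True then show ?thesis using R1 by (simp add: mult_2)
  next
    case False
    then have h: "tbr n (Ek 1 (2*n)) (C r n - C (n+n) (n+r)) \<in> L"
      using brc[OF R1 Pu[of r n]] r by simp
    have "tbr n (Ek 1 (2*n)) (C r n - C (n+n) (n+r)) = - Ek 1 (n+r)"
      using n3 k0 r False by (simp add: cc)
    then show ?thesis using neg[OF h] by simp
  qed
qed

lemma Q2: "1 \<le> r \<Longrightarrow> r \<le> n \<Longrightarrow> Ek (n+r) 1 \<in> L"
proof -
  assume r: "1 \<le> r" "r \<le> n"
  show ?thesis
  proof (cases "r = n")
    case True then show ?thesis using Q1 by (simp add: mult_2)
  next
    case False
    then have h: "tbr n (Ek (2*n) 1) (C n r - C (n+r) (n+n)) \<in> L"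
      using brc[OF Q1 Pl[of r n]] r by simp
    have "tbr n (Ek (2*n) 1) (C n r - C (n+r) (n+n)) = Ek (n+r) 1"
      using n3 k0 r False by (simp add: cc)
    then show ?thesis using h by simp
  qed
qed

lemma Q3: "2 \<le> q \<Longrightarrow> q \<le> n \<Longrightarrow> Ek (2*n) q \<in> L"
proof -
  assume q: "2 \<le> q" "q \<le> n"
  then have h: "tbr n (Ek (2*n) 1) (C 1 q - C (n+q) (n+1)) \<in> L"
    using brc[OF Q1 Pu[of 1 q]] by simp
  have "tbr n (Ek (2*n) 1) (C 1 q - C (n+q) (n+1)) = Ek (2*n) q"
    using n3 k0 q by (simp add: cc)
  then show ?thesis using h by simp
qed

lemma P1: "2 \<le> q \<Longrightarrow> q \<le> n \<Longrightarrow> Ek 1 q \<in> L"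
proof -
  assume q: "2 \<le> q" "q \<le> n"
  have h: "tbr n (Ek 1 (2*n)) (Ek (2*n) q) \<in> L" using brc[OF R1 Q3[OF q]] .
  have "tbr n (Ek 1 (2*n)) (Ek (2*n) q) = Ek 1 q"
    using n3 k0 q by (simp add: cc)
  then show ?thesis using h by simp
qed

lemma R3: "2 \<le> q \<Longrightarrow> q \<le> n \<Longrightarrow> Ek q (2*n) \<in> L"
proof -
  assume q: "2 \<le> q" "q \<le> n"
  then have h: "tbr n (Ek 1 (2*n)) (C q 1 - C (n+1) (n+q)) \<in> L"
    using brc[OF R1 Pl[of 1 q]] by simp
  have "tbr n (Ek 1 (2*n)) (C q 1 - C (n+1) (n+q)) = - Ek q (2*n)"
    using n3 k0 q by (simp add: cc)
  then show ?thesis using neg[OF h] by simp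
qed

lemma P2: "2 \<le> q \<Longrightarrow> q \<le> n \<Longrightarrow> Ek q 1 \<in> L"
proof -
  assume q: "2 \<le> q" "q \<le> n"
  have h: "tbr n (Ek q (2*n)) (Ek (2*n) 1) \<in> L" using brc[OF R3[OF q] Q1] .
  have "tbr n (Ek q (2*n)) (Ek (2*n) 1) = Ek q 1"
    using n3 k0 q by (simp add: cc)
  then show ?thesis using h by simp
qed

lemma row: "2 \<le> q \<Longrightarrow> q \<le> 2*n \<Longrightarrow> Ek 1 q \<in> L \<and> Ek q 1 \<in> L"
proof -
  assume q: "2 \<le> q" "q \<le> 2*n"
  show ?thesis
  proof (cases "q \<le> n")
    case True then show ?thesis using P1 P2 q by auto
  next
    case False
    define r where "r = q - n"
    have "q = n + r" "1 \<le> r" "r \<le> n" using q False unfolding r_def by auto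
    then show ?thesis using R2 Q2 by auto
  qed
qed

lemma allE: "p \<in> {1..2*n} \<Longrightarrow> q \<in> {1..2*n} \<Longrightarrow> p \<noteq> q \<Longrightarrow> Ek p q \<in> L"
proof -
  assume h: "p \<in> {1..2*n}" "q \<in> {1..2*n}" "p \<noteq> q"
  show ?thesis
  proof (cases "p = 1 \<or> q = 1")
    case True then show ?thesis using row h by auto
  next
    case False
    then have "tbr n (Ek p 1) (Ek 1 q) \<in> L" using row h brc by auto
    moreover have "tbr n (Ek p 1) (Ek 1 q) = Ek p q" using h n3 False by (simp add: cc)
    ultimately show ?thesis by simp
  qed
qed

lemma diagE: "p \<in> {1..2*n} \<Longrightarrow> Ek p p - Ek 1 1 \<in> L"
proof -
  assume h: "p \<in> {1..2*n}"
  show ?thesis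
  proof (cases "p = 1")
    case True then show ?thesis using zero by simp
  next
    case False
    then have "tbr n (Ek p 1) (Ek 1 p) \<in> L" using row h brc by auto
    moreover have "tbr n (Ek p 1) (Ek 1 p) = Ek p p - Ek 1 1" using h n3 False by (simp add: cc)
    ultimately show ?thesis by simp
  qed
qed

end

end


lemma sum_apply_fun: "(\<Sum>x\<in>A. f x) k = (\<Sum>x\<in>A. f x k)"
  by (induction A rule: infinite_finite_induct) auto

lemma expand:
  assumes X: "X \<in> slK n K"
  shows "(\<Sum>k\<in>{1..K}. \<Sum>p\<in>{1..2*n}. \<Sum>q\<in>{1..2*n}. tsc (X k p q) (E K k p q)) = X"
proof (intro ext)
  fix k' i j
  have "(\<Sum>k\<in>{1..K}. \<Sum>p\<in>{1..2*n}. \<Sum>q\<in>{1..2*n}. tsc (X k p q) (E K k p q)) k' i j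
     = (\<Sum>k\<in>{1..K}. \<Sum>p\<in>{1..2*n}. \<Sum>q\<in>{1..2*n}. if k = k' \<and> k' \<in> {1..K} \<and> p = i \<and> q = j then X k p q else 0)"
    by (simp add: sum_apply_fun tsc_def E_def T_def) (intro sum.cong refl, auto)
  also have "\<dots> = (if k' \<in> {1..K} \<and> i \<in> {1..2*n} \<and> j \<in> {1..2*n} then X k' i j else 0)"
  proof (cases "k' \<in> {1..K} \<and> i \<in> {1..2*n} \<and> j \<in> {1..2*n}")
    case True
    have s1: "(\<Sum>q\<in>{1..2*n}. if k = k' \<and> k' \<in> {1..K} \<and> p = i \<and> q = j then X k p q else 0)
        = (if k = k' \<and> p = i then X k' i j else 0)" for k p
      using True by (cases "k = k' \<and> p = i") auto
    have s2: "(\<Sum>p\<in>{1..2*n}. if k = k' \<and> p = i then X k' i j else 0)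
        = (if k = k' then X k' i j else 0)" for k
      using True by (cases "k = k'") auto
    have "(\<Sum>k\<in>{1..K}. \<Sum>p\<in>{1..2*n}. \<Sum>q\<in>{1..2*n}. if k = k' \<and> k' \<in> {1..K} \<and> p = i \<and> q = j then X k p q else 0)
       = (\<Sum>k\<in>{1..K}. \<Sum>p\<in>{1..2*n}. if k = k' \<and> p = i then X k' i j else 0)"
      by (intro sum.cong refl) (rule s1)
    also have "\<dots> = (\<Sum>k\<in>{1..K}. if k = k' then X k' i j else 0)"
      by (intro sum.cong refl) (rule s2)
    also have "\<dots> = X k' i j" using True by simp
    finally show ?thesis using True by simp
  next
    case False
    then show ?thesis by (auto intro!: sum.neutral)
  qed
  also have "\<dots> = X k' i j" using X unfolding slK_def by auto
  finally show "(\<Sum>k\<in>{1..K}. \<Sum>p\<in>{1..2*n}. \<Sum>q\<in>{1..2*n}. tsc (X k p q) (E K k p q)) k' i j = X k' i j" .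
qed

lemma tsc_diff: "tsc c (A - B) = tsc c A - tsc c B"
  unfolding tsc_def by (intro ext) (simp add: algebra_simps)
lemma tsc_0: "tsc 0 B = 0"
  unfolding tsc_def by (intro ext) simp
lemma tsc_sum: "(\<Sum>p\<in>A. tsc (c p) B) = tsc (\<Sum>p\<in>A. c p) B"
  unfolding tsc_def by (intro ext) (simp add: sum_apply_fun sum_distrib_right)

context LL begin

lemma sumL: "finite A \<Longrightarrow> (\<forall>x\<in>A. f x \<in> L) \<Longrightarrow> sum f A \<in> L"
  by (induction A rule: finite_induct) (auto intro: add zero)

lemma span: assumes X: "X \<in> slK n K" shows "X \<in> L"
proof -
  define Y where "Y k = (\<Sum>p\<in>{1..2*n}. (\<Sum>q\<in>{1..2*n}-{p}. tsc (X k p q) (E K k p q))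
        + tsc (X k p p) (E K k p p - E K k 1 1))" for k
  have YL: "Y k \<in> L" if k: "k \<in> {1..K}" for k
    unfolding Y_def
    by (intro sumL ballI add scl allE[OF k] diagE[OF k]) auto
  have Yeq: "Y k = (\<Sum>p\<in>{1..2*n}. \<Sum>q\<in>{1..2*n}. tsc (X k p q) (E K k p q))" if k: "k \<in> {1..K}" for k
  proof -
    have "Y k = (\<Sum>p\<in>{1..2*n}. (\<Sum>q\<in>{1..2*n}. tsc (X k p q) (E K k p q)) - tsc (X k p p) (E K k 1 1))"
      unfolding Y_def
    proof (intro sum.cong refl)
      fix p assume p: "p \<in> {1..2*n}"
      have "(\<Sum>q\<in>{1..2*n}. tsc (X k p q) (E K k p q)) = tsc (X k p p) (E K k p p) + (\<Sum>q\<in>{1..2*n}-{p}. tsc (X k p q) (E K k p q))"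
        using p by (intro sum.remove) auto
      then show "(\<Sum>q\<in>{1..2*n}-{p}. tsc (X k p q) (E K k p q)) + tsc (X k p p) (E K k p p - E K k 1 1)
          = (\<Sum>q\<in>{1..2*n}. tsc (X k p q) (E K k p q)) - tsc (X k p p) (E K k 1 1)"
        by (simp add: tsc_diff algebra_simps)
    qed
    also have "\<dots> = (\<Sum>p\<in>{1..2*n}. \<Sum>q\<in>{1..2*n}. tsc (X k p q) (E K k p q)) - tsc (\<Sum>p\<in>{1..2*n}. X k p p) (E K k 1 1)"
      by (simp add: sum_subtractf tsc_sum)
    also have "(\<Sum>p\<in>{1..2*n}. X k p p) = 0" using X k unfolding slK_def by auto
    finally show ?thesis by (simp add: tsc_0)
  qed
  have "(\<Sum>k\<in>{1..K}. Y k) \<in> L" using YL by (intro sumL) auto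
  moreover have "(\<Sum>k\<in>{1..K}. Y k) = X"
    using Yeq expand[OF X] by simp
  ultimately show ?thesis by simp
qed

end


lemma slK_add: "X \<in> slK n K \<Longrightarrow> Y \<in> slK n K \<Longrightarrow> X + Y \<in> slK n K"
  unfolding slK_def by (auto simp: sum.distrib)
lemma slK_tsc: "X \<in> slK n K \<Longrightarrow> tsc c X \<in> slK n K"
  unfolding slK_def tsc_def by (auto simp: sum_distrib_left[symmetric])
lemma slK_zero: "0 \<in> slK n K"
  unfolding slK_def by auto
lemma slK_T: "p \<noteq> q \<Longrightarrow> p \<in> {1..2*n} \<Longrightarrow> q \<in> {1..2*n} \<Longrightarrow> T K w p q \<in> slK n K"
  unfolding slK_def T_def by (auto intro!: sum.neutral)
lemma slK_diff: "X \<in> slK n K \<Longrightarrow> Y \<in> slK n K \<Longrightarrow> X - Y \<in> slK n K"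
  unfolding slK_def by (auto simp: sum_subtractf)
lemma slK_tbr: assumes X: "X \<in> slK n K" and Y: "Y \<in> slK n K" shows "tbr n X Y \<in> slK n K"
proof -
  have X0: "X k i j = 0" if "k \<notin> {1..K} \<or> i \<notin> {1..2*n} \<or> j \<notin> {1..2*n}" for k i j
    using X that unfolding slK_def by blast
  have Y0: "Y k i j = 0" if "k \<notin> {1..K} \<or> i \<notin> {1..2*n} \<or> j \<notin> {1..2*n}" for k i j
    using Y that unfolding slK_def by blast
  have out: "tbr n X Y k i j = 0" if "k \<notin> {1..K} \<or> i \<notin> {1..2*n} \<or> j \<notin> {1..2*n}" for k i j
    unfolding tbr_def mcomm_def using that
    by (auto simp: X0 Y0 intro!: sum.neutral)
  have tr: "(\<Sum>i=1..2*n. tbr n X Y k i i) = 0" for k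
  proof -
    have "(\<Sum>i=1..2*n. \<Sum>l=1..2*n. X k i l * Y k l i) = (\<Sum>i=1..2*n. \<Sum>l=1..2*n. Y k i l * X k l i)"
      by (subst sum.swap) (simp add: mult.commute)
    then show ?thesis unfolding tbr_def mcomm_def by (simp add: sum_subtractf)
  qed
  show ?thesis unfolding slK_def using out tr by auto
qed

theorem lemma5p1:
  fixes n K :: nat and a :: "nat \<Rightarrow> complex"
    and sc :: "complex \<Rightarrow> 'g::ab_group_add \<Rightarrow> 'g" and br :: "'g \<Rightarrow> 'g \<Rightarrow> 'g"
    and e f h :: "nat \<Rightarrow> 'g" and psi :: "'g \<Rightarrow> cmats"
  assumes "n \<ge> 3" and "K \<ge> 1"
    and "\<forall>k\<in>{1..K}. a k \<noteq> 0"
    and "\<forall>k\<in>{1..K}. \<forall>j\<in>{1..K}. k \<noteq> j \<longrightarrow> a k \<noteq> a j \<and> a k \<noteq> inverse (a j)"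
    and "\<forall>k\<in>{1..K}. a k \<noteq> 1 \<and> a k \<noteq> -1"
    and "lie_algebra sc br"
    and "gim_relations n sc br e f h"
    and "lie_generated sc br (e ` {1..n} \<union> f ` {1..n} \<union> h ` {1..n}) = UNIV"
    and "\<forall>x y. psi (x + y) = psi x + psi y"
    and "\<forall>c x. psi (sc c x) = tsc c (psi x)"
    and "\<forall>x y. psi (br x y) = tbr n (psi x) (psi y)"
    and "\<forall>i\<in>{1..n}. psi (e i) = tuple_of K (\<lambda>k. psi_e (a k) n i)"
    and "\<forall>i\<in>{1..n}. psi (f i) = tuple_of K (\<lambda>k. psi_f (a k) n i)"
  shows "range psi = slK n K"
proof -
  note n3 = assms(1) and anz = assms(3) and adist = assms(4) and a1 = assms(5)
  note rel = assms(7) and lgen = assms(8) and padd = assms(9) and psc = assms(10) and pbr = assms(11)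
  note pe = assms(12) and pf = assms(13)
  have psi0: "psi 0 = 0"
  proof -
    have "psi 0 = psi 0 + psi 0" using padd by (metis add.right_neutral)
    then show ?thesis by simp
  qed
  have ei: "psi (e i) = T K (\<lambda>_. 1) i (i+1) - T K (\<lambda>_. 1) (n+i+1) (n+i)" if "1 \<le> i" "i < n" for i
    using pe that unfolding tuple_of_def psi_e_def Eu_def T_def by (intro ext) auto
  have fi: "psi (f i) = T K (\<lambda>_. 1) (i+1) i - T K (\<lambda>_. 1) (n+i) (n+i+1)" if "1 \<le> i" "i < n" for i
    using pf that unfolding tuple_of_def psi_f_def Eu_def T_def by (intro ext) auto
  have en: "psi (e n) = T K (\<lambda>_. 1) n (n+1) + T K (\<lambda>k. inverse (a k)) 1 (2*n)"
    using pe n3 unfolding tuple_of_def psi_e_def Eu_def T_def msc_def by (intro ext) auto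
  have fn: "psi (f n) = T K (\<lambda>_. 1) (n+1) n + T K a (2*n) 1"
    using pf n3 unfolding tuple_of_def psi_f_def Eu_def T_def msc_def by (intro ext) auto
  interpret LL n K "range psi" a
  proof
    show "3 \<le> n" by (rule n3)
    show "x + y \<in> range psi" if "x \<in> range psi" "y \<in> range psi" for x y
    proof -
      from that obtain u v where "x = psi u" "y = psi v" by auto
      then have "x + y = psi (u + v)" using padd by simp
      then show ?thesis by simp
    qed
    show "tsc c x \<in> range psi" if "x \<in> range psi" for x c
    proof -
      from that obtain u where "x = psi u" by auto
      then have "tsc c x = psi (sc c u)" using psc by simp
      then show ?thesis by simp
    qed
    show "tbr n x y \<in> range psi" if "x \<in> range psi" "y \<in> range psi" for x y
    proof -
      from that obtain u v where "x = psi u" "y = psi v" by auto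
      then have "tbr n x y = psi (br u v)" using pbr by simp
      then show ?thesis by simp
    qed
    show "0 \<in> range psi" using psi0 by (metis rangeI)
    show "T K (\<lambda>_. 1) i (i+1) - T K (\<lambda>_. 1) (n+i+1) (n+i) \<in> range psi" if "1 \<le> i" "i < n" for i
      using ei[OF that] by (metis rangeI)
    show "T K (\<lambda>_. 1) (i+1) i - T K (\<lambda>_. 1) (n+i) (n+i+1) \<in> range psi" if "1 \<le> i" "i < n" for i
      using fi[OF that] by (metis rangeI)
    show "T K (\<lambda>_. 1) n (n+1) + T K (\<lambda>k. inverse (a k)) 1 (2*n) \<in> range psi"
      by (subst en[symmetric]) (rule rangeI)
    show "T K (\<lambda>_. 1) (n+1) n + T K a (2*n) 1 \<in> range psi"
      by (subst fn[symmetric]) (rule rangeI)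
  qed (use anz a1 adist in auto)
  have gens: "psi (e i) \<in> slK n K \<and> psi (f i) \<in> slK n K" if "i \<in> {1..n}" for i
  proof (cases "i = n")
    case True then show ?thesis using en fn n3 by (auto intro!: slK_add slK_T)
  next
    case False then show ?thesis using ei fi that by (auto intro!: slK_diff slK_T)
  qed
  have "x \<in> {x. psi x \<in> slK n K}" for x
  proof -
    have "x \<in> lie_generated sc br (e ` {1..n} \<union> f ` {1..n} \<union> h ` {1..n})" using lgen by simp
    moreover have "{x. psi x \<in> slK n K} \<in> {V. (e ` {1..n} \<union> f ` {1..n} \<union> h ` {1..n}) \<subseteq> V \<and> 0 \<in> V
        \<and> (\<forall>x\<in>V. \<forall>y\<in>V. x + y \<in> V) \<and> (\<forall>c. \<forall>x\<in>V. sc c x \<in> V) \<and> (\<forall>x\<in>V. \<forall>y\<in>V. br x y \<in> V)}"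
    proof (intro CollectI conjI ballI allI subsetI)
      fix z assume "z \<in> e ` {1..n} \<union> f ` {1..n} \<union> h ` {1..n}"
      then obtain i where i: "i \<in> {1..n}" "z = e i \<or> z = f i \<or> z = h i" by auto
      have "h i = br (e i) (f i)" using rel i(1) unfolding gim_relations_def by auto
      then have "psi (h i) = tbr n (psi (e i)) (psi (f i))" using pbr by simp
      then show "psi z \<in> slK n K" using i gens[OF i(1)] slK_tbr by auto
    next
      show "psi 0 \<in> slK n K" using psi0 slK_zero by simp
    next
      fix x y assume "x \<in> {x. psi x \<in> slK n K}" "y \<in> {x. psi x \<in> slK n K}"
      then show "psi (x + y) \<in> slK n K" "psi (br x y) \<in> slK n K"
        using padd pbr slK_add slK_tbr by auto
    next
      fix c x assume "x \<in> {x. psi x \<in> slK n K}"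
      then show "psi (sc c x) \<in> slK n K" using psc slK_tsc by auto
    qed
    ultimately show ?thesis unfolding lie_generated_def by blast
  qed
  then have "range psi \<subseteq> slK n K" by auto
  moreover have "slK n K \<subseteq> range psi" using span by blast
  ultimately show ?thesis by blast
qed

end
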